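(* (Repeated insertion model.) For each $1\le x\le n$ let $\theta(\cdot,x)$ be a probability vector on $\{1,\ldots,x\}$, and define the distribution $p$ on $S_n$ by \[ p(\pi)=\prod_{x=1}^n\theta(r_x(\pi),x),\qquad r_x(\pi)=\bigl|\{j\le x:\ \pi^{-1}(j)\le\pi^{-1}(x)\}\bigr| \] (the position of $x$ in the relative order of $1,\ldots,x$ in the sequence $(\pi(1),\ldots,\pi(n))$). Then $p$ is bi-decomposable; in particular $p(\pi)=\prod_{k=0}^{n-1}\Lambda(\pi(k+1),\pi\{1:k\})$ with $\Lambda(x,C)=\theta(|C\cap\{1,\ldots,x\}|+1,x)$.
   Context: $S_n$ is the group of permutations of $\{1,\ldots,n\}$; $\pi\{1:k\}=\{\pi(1),\ldots,\pi(k)\}$. A distribution $p$ on $S_n$ is $L$-decomposable if there exist a nonnegative function $\Lambda$ on pairs $(x,C)$ with $C\subset\{1,\ldots,n\}$, $x\notin C$, and a constant $c$ with $p(\pi)=c\prod_{k=0}^{n-1}\Lambda(\pi(k+1),\pi\{1:k\})$ for all $\pi$. $p$ is bi-decomposable if both $p$ and $\pi\mapsto p(\pi^{-1})$ are $L$-decomposable. *)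

theory Defs
  imports Complex_Main "HOL-Combinatorics.Permutations"
begin

text \<open>S_n is modelled as the set of functions pi :: nat => nat with pi permutes {1..n}.
  pi{1:k} = pi ` {1..k}.\<close>

definition L_decomposable :: "nat \<Rightarrow> ((nat \<Rightarrow> nat) \<Rightarrow> real) \<Rightarrow> bool" where
  "L_decomposable n p \<longleftrightarrow>
     (\<exists>(\<Lambda> :: nat \<Rightarrow> nat set \<Rightarrow> real) (c :: real).
        (\<forall>x C. C \<subseteq> {1..n} \<and> x \<in> {1..n} \<and> x \<notin> C \<longrightarrow> \<Lambda> x C \<ge> 0) \<and>
        (\<forall>\<pi>. \<pi> permutes {1..n} \<longrightarrow>
              p \<pi> = c * (\<Prod>k<n. \<Lambda> (\<pi> (k+1)) (\<pi> ` {1..k}))))"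

definition bi_decomposable :: "nat \<Rightarrow> ((nat \<Rightarrow> nat) \<Rightarrow> real) \<Rightarrow> bool" where
  "bi_decomposable n p \<longleftrightarrow> L_decomposable n p \<and> L_decomposable n (\<lambda>\<pi>. p (inv \<pi>))"

definition rim_rank :: "(nat \<Rightarrow> nat) \<Rightarrow> nat \<Rightarrow> nat" where
  "rim_rank \<pi> x = card {j \<in> {1..x}. inv \<pi> j \<le> inv \<pi> x}"

end

theory Submission
  imports Defs
begin

lemma permI_facts:
  fixes \<pi> :: "nat \<Rightarrow> nat" and n :: nat
  assumes "\<pi> permutes {1..n}"
  shows "bij_betw (\<lambda>k. \<pi> (k+1)) {..<n} {1..n}"
proof -
  have b1: "bij_betw (\<lambda>k. k+1) {..<n} {1..n}"
    unfolding bij_betw_def inj_on_def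
  proof (intro conjI ballI impI, simp, auto simp: image_iff)
    fix x :: nat assume "Suc 0 \<le> x" "x \<le> n"
    then show "\<exists>xa\<in>{..<n}. x = Suc xa" by (intro bexI[of _ "x - 1"]) auto
  qed
  have b2: "bij_betw \<pi> {1..n} {1..n}" using assms by (rule permutes_imp_bij)
  have "bij_betw (\<pi> \<circ> (\<lambda>k. k+1)) {..<n} {1..n}" using b1 b2 by (rule bij_betw_trans)
  thus ?thesis by (simp add: comp_def)
qed

lemma termA:
  assumes p: "\<pi> permutes {1..n}" and k: "k < n"
  shows "rim_rank \<pi> (\<pi> (k+1)) = card (\<pi> ` {1..k} \<inter> {1..\<pi> (k+1)}) + 1"
proof -
  let ?x = "\<pi> (k+1)"
  have ix: "inv \<pi> ?x = k+1" using permutes_inverses(2)[OF p] by simp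
  have xin: "?x \<in> {1..n}" using permutes_in_image[OF p] k by simp
  have "{j \<in> {1..?x}. inv \<pi> j \<le> inv \<pi> ?x} = insert ?x (\<pi> ` {1..k} \<inter> {1..?x})"
  proof (rule set_eqI, rule iffI)
    fix j assume j: "j \<in> {j \<in> {1..?x}. inv \<pi> j \<le> inv \<pi> ?x}"
    show "j \<in> insert ?x (\<pi> ` {1..k} \<inter> {1..?x})"
    proof (cases "j = ?x")
      case False
      have jn: "j \<in> {1..n}" using j xin by auto
      have "inv \<pi> j \<in> {1..n}" using permutes_in_image[OF permutes_inv[OF p]] jn by simp
      moreover have "inv \<pi> j \<noteq> k+1" using False ix permutes_inverses(1)[OF p]
        by metis
      ultimately have "inv \<pi> j \<in> {1..k}" using j ix by auto
      moreover have "\<pi> (inv \<pi> j) = j" using permutes_inverses(1)[OF p] by simp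
      ultimately show ?thesis using j by (metis IntI image_eqI insertI2 mem_Collect_eq)
    qed simp
  next
    fix j assume j: "j \<in> insert ?x (\<pi> ` {1..k} \<inter> {1..?x})"
    show "j \<in> {j \<in> {1..?x}. inv \<pi> j \<le> inv \<pi> ?x}"
    proof (cases "j = ?x")
      case True then show ?thesis using xin by auto
    next
      case False
      then obtain i where i: "i \<in> {1..k}" "j = \<pi> i" "j \<in> {1..?x}" using j by auto
      have "inv \<pi> j = i" using i permutes_inverses(2)[OF p] by simp
      then show ?thesis using i ix by auto
    qed
  qed
  moreover have "?x \<notin> \<pi> ` {1..k} \<inter> {1..?x}"
  proof
    assume "?x \<in> \<pi> ` {1..k} \<inter> {1..?x}"
    then obtain i where "i \<in> {1..k}" "?x = \<pi> i" by auto
    then have "inv \<pi> ?x = i" using permutes_inverses(2)[OF p] by simp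
    then show False using ix \<open>i \<in> {1..k}\<close> by auto
  qed
  ultimately show ?thesis unfolding rim_rank_def by simp
qed

lemma termB:
  assumes p: "\<pi> permutes {1..n}" and k: "k < n"
  shows "rim_rank (inv \<pi>) (k+1) = card (\<pi> ` {1..k} \<inter> {1..\<pi> (k+1)}) + 1"
    and "card (\<pi> ` {1..k}) = k"
proof -
  have bij: "bij \<pi>" using p by (rule permutes_bij)
  have ii: "inv (inv \<pi>) = \<pi>" using bij by (rule inv_inv_eq)
  have inj: "inj \<pi>" using bij bij_is_inj by blast
  show "card (\<pi> ` {1..k}) = k" using card_image[OF inj_on_subset[OF inj]] by simp
  have e1: "{j \<in> {1..k+1}. \<pi> j \<le> \<pi> (k+1)} = insert (k+1) {j \<in> {1..k}. \<pi> j \<le> \<pi> (k+1)}"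
    by auto
  have e2: "\<pi> ` {j \<in> {1..k}. \<pi> j \<le> \<pi> (k+1)} = \<pi> ` {1..k} \<inter> {1..\<pi> (k+1)}"
  proof (rule set_eqI, rule iffI)
    fix y assume "y \<in> \<pi> ` {j \<in> {1..k}. \<pi> j \<le> \<pi> (k+1)}"
    then obtain j where j: "j \<in> {1..k}" "\<pi> j \<le> \<pi> (k+1)" "y = \<pi> j" by auto
    have "\<pi> j \<in> {1..n}" using permutes_in_image[OF p] j k by simp
    then show "y \<in> \<pi> ` {1..k} \<inter> {1..\<pi> (k+1)}" using j by auto
  qed auto
  have "card {j \<in> {1..k}. \<pi> j \<le> \<pi> (k+1)} = card (\<pi> ` {1..k} \<inter> {1..\<pi> (k+1)})"
    using card_image[OF inj_on_subset[OF inj], of "{j \<in> {1..k}. \<pi> j \<le> \<pi> (k+1)}"] e2 by simp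
  then show "rim_rank (inv \<pi>) (k+1) = card (\<pi> ` {1..k} \<inter> {1..\<pi> (k+1)}) + 1"
    unfolding rim_rank_def ii e1 by simp
qed

lemma prodA:
  assumes p: "\<pi> permutes {1..n}"
  shows "(\<Prod>x=1..n. \<theta> (rim_rank \<pi> x) x) =
     (\<Prod>k<n. \<theta> (card (\<pi> ` {1..k} \<inter> {1..\<pi> (k+1)}) + 1) (\<pi> (k+1)))"
proof -
  have "(\<Prod>x=1..n. \<theta> (rim_rank \<pi> x) x) = (\<Prod>k<n. \<theta> (rim_rank \<pi> (\<pi> (k+1))) (\<pi> (k+1)))"
    using prod.reindex_bij_betw[OF permI_facts[OF p], of "\<lambda>x. \<theta> (rim_rank \<pi> x) x"] by simp
  also have "\<dots> = (\<Prod>k<n. \<theta> (card (\<pi> ` {1..k} \<inter> {1..\<pi> (k+1)}) + 1) (\<pi> (k+1)))"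
    by (rule prod.cong[OF refl]) (simp only: termA[OF p] lessThan_iff)
  finally show ?thesis .
qed

lemma prodB:
  assumes p: "\<pi> permutes {1..n}"
  shows "(\<Prod>x=1..n. \<theta> (rim_rank (inv \<pi>) x) x) =
     (\<Prod>k<n. \<theta> (card (\<pi> ` {1..k} \<inter> {1..\<pi> (k+1)}) + 1) (card (\<pi> ` {1..k}) + 1))"
proof -
  have "(\<Prod>x=1..n. \<theta> (rim_rank (inv \<pi>) x) x) = (\<Prod>k<n. \<theta> (rim_rank (inv \<pi>) (k+1)) (k+1))"
    by (rule prod.reindex_bij_witness[where i="\<lambda>k. k+1" and j="\<lambda>x. x - 1"]) auto
  also have "\<dots> = (\<Prod>k<n. \<theta> (card (\<pi> ` {1..k} \<inter> {1..\<pi> (k+1)}) + 1) (card (\<pi> ` {1..k}) + 1))"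
    by (rule prod.cong[OF refl]) (simp only: termB[OF p] lessThan_iff)
  finally show ?thesis .
qed

theorem mainTheorem14:
  fixes n :: nat and \<theta> :: "nat \<Rightarrow> nat \<Rightarrow> real" and p :: "(nat \<Rightarrow> nat) \<Rightarrow> real"
  assumes theta_nonneg: "\<And>x r. 1 \<le> x \<Longrightarrow> x \<le> n \<Longrightarrow> 1 \<le> r \<Longrightarrow> r \<le> x \<Longrightarrow> \<theta> r x \<ge> 0"
    and theta_sum: "\<And>x. 1 \<le> x \<Longrightarrow> x \<le> n \<Longrightarrow> (\<Sum>r=1..x. \<theta> r x) = 1"
    and p_def: "p = (\<lambda>\<pi>. \<Prod>x=1..n. \<theta> (rim_rank \<pi> x) x)"
  shows "bi_decomposable n p \<and>
         (\<forall>\<pi>. \<pi> permutes {1..n} \<longrightarrow>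
            p \<pi> = (\<Prod>k<n. (\<lambda>x C. \<theta> (card (C \<inter> {1..x}) + 1) x) (\<pi> (k+1)) (\<pi> ` {1..k})))"
proof -
  have main: "\<forall>\<pi>. \<pi> permutes {1..n} \<longrightarrow>
            p \<pi> = (\<Prod>k<n. (\<lambda>x C. \<theta> (card (C \<inter> {1..x}) + 1) x) (\<pi> (k+1)) (\<pi> ` {1..k}))"
    using prodA unfolding p_def by blast
  have L1: "L_decomposable n p"
    unfolding L_decomposable_def
  proof (intro exI[of _ "\<lambda>x C. \<theta> (card (C \<inter> {1..x}) + 1) x"] exI[of _ 1] conjI allI impI)
    fix x C assume a: "C \<subseteq> {1..n} \<and> x \<in> {1..n} \<and> x \<notin> C"
    have "C \<inter> {1..x} \<subseteq> {1..<x}" using a by (auto simp: le_less)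
    then have "card (C \<inter> {1..x}) \<le> card {1..<x}" by (intro card_mono) auto
    then have "card (C \<inter> {1..x}) + 1 \<le> x" using a by auto
    then show "0 \<le> \<theta> (card (C \<inter> {1..x}) + 1) x" using a by (intro theta_nonneg) auto
  next
    fix \<pi> :: "nat \<Rightarrow> nat" assume "\<pi> permutes {1..n}"
    then show "p \<pi> = 1 * (\<Prod>k<n. \<theta> (card (\<pi> ` {1..k} \<inter> {1..\<pi> (k + 1)}) + 1) (\<pi> (k + 1)))"
      using main by simp
  qed
  have L2: "L_decomposable n (\<lambda>\<pi>. p (inv \<pi>))"
    unfolding L_decomposable_def
  proof (intro exI[of _ "\<lambda>y C. \<theta> (card (C \<inter> {1..y}) + 1) (card C + 1)"] exI[of _ 1] conjI allI impI)
    fix x C assume a: "C \<subseteq> {1..n} \<and> x \<in> {1..n} \<and> x \<notin> C"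
    have "C \<subseteq> {1..n} - {x}" using a by auto
    then have "card C \<le> card ({1..n} - {x})" by (intro card_mono) auto
    then have c1: "card C + 1 \<le> n" using a by auto
    have "card (C \<inter> {1..x}) \<le> card C" using a by (intro card_mono) (auto intro: finite_subset)
    then show "0 \<le> \<theta> (card (C \<inter> {1..x}) + 1) (card C + 1)" using c1 by (intro theta_nonneg) auto
  next
    fix \<pi> :: "nat \<Rightarrow> nat" assume "\<pi> permutes {1..n}"
    then show "p (inv \<pi>) = 1 * (\<Prod>k<n. \<theta> (card (\<pi> ` {1..k} \<inter> {1..\<pi> (k + 1)}) + 1) (card (\<pi> ` {1..k}) + 1))"
      using prodB unfolding p_def by simp
  qed
  show ?thesis using L1 L2 main unfolding bi_decomposable_def by blast
qed

end
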